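(* Let $g\in{\cal H}_d$. Call a compact set $V\subset{\bf C}^2$ admissible if $K\subset \mathrm{int}\,V$, $g(J^+\cap V)\subset J^+\cap V$ and $g^{-1}(J^-\cap V)\subset J^-\cap V$. For admissible $V$ define $$s^\pm(V)=\lim_{n\to\infty}\frac1n\log\max\{\|Dg^{\pm n}(p)\|:p\in J^\pm\cap V\}.$$ Then $s^+(V)$ and $s^-(V)$ do not depend on the choice of the admissible set $V$.
   Context: A generalized Hénon map is a map $g_i(z,w)=(w,P_i(w)+a_iz)$ of ${\bf C}^2$, where $P_i$ is a complex polynomial of degree $d_i\ge 2$ and $a_i\in{\bf C}\setminus\{0\}$. For $d\ge 2$, ${\cal H}_d$ denotes the set of all finite compositions $g=g_1\circ\cdots\circ g_m$ of generalized Hénon maps with $d_1\cdots d_m=d$. $K^\pm$ is the set of points whose forward ($+$) resp. backward ($-$) orbit under $g$ is bounded, $K=K^+\cap K^-$, $J^\pm=\partial K^\pm$. The limits defining $s^\pm(V)$ exist (submultiplicativity) and do not depend on the norm used. *)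

theory Defs
  imports "HOL-Analysis.Analysis" "HOL-Computational_Algebra.Polynomial"
begin

definition henon :: "complex poly \<Rightarrow> complex \<Rightarrow> complex \<times> complex \<Rightarrow> complex \<times> complex" where
  "henon P a = (\<lambda>(z, w). (w, poly P w + a * z))"

definition Hd :: "nat \<Rightarrow> (complex \<times> complex \<Rightarrow> complex \<times> complex) set" where
  "Hd d = {foldr (\<lambda>(P, a) f. henon P a \<circ> f) L id | L.
      L \<noteq> [] \<and> (\<forall>(P, a) \<in> set L. degree P \<ge> 2 \<and> a \<noteq> 0) \<and>
      (\<Prod>(P, a) \<leftarrow> L. degree P) = d}"

definition Kplus :: "(complex \<times> complex \<Rightarrow> complex \<times> complex) \<Rightarrow> (complex \<times> complex) set" where
  "Kplus g = {p. bounded (range (\<lambda>n. (g ^^ n) p))}"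

definition Kminus :: "(complex \<times> complex \<Rightarrow> complex \<times> complex) \<Rightarrow> (complex \<times> complex) set" where
  "Kminus g = {p. bounded (range (\<lambda>n. (inv g ^^ n) p))}"

definition Kset :: "(complex \<times> complex \<Rightarrow> complex \<times> complex) \<Rightarrow> (complex \<times> complex) set" where
  "Kset g = Kplus g \<inter> Kminus g"

definition Jplus :: "(complex \<times> complex \<Rightarrow> complex \<times> complex) \<Rightarrow> (complex \<times> complex) set" where
  "Jplus g = frontier (Kplus g)"

definition Jminus :: "(complex \<times> complex \<Rightarrow> complex \<times> complex) \<Rightarrow> (complex \<times> complex) set" where
  "Jminus g = frontier (Kminus g)"

definition admissible :: "(complex \<times> complex \<Rightarrow> complex \<times> complex) \<Rightarrow> (complex \<times> complex) set \<Rightarrow> bool" where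
  "admissible g V \<longleftrightarrow> compact V \<and> Kset g \<subseteq> interior V \<and>
     g ` (Jplus g \<inter> V) \<subseteq> Jplus g \<inter> V \<and>
     inv g ` (Jminus g \<inter> V) \<subseteq> Jminus g \<inter> V"

definition growth_seq :: "(complex \<times> complex \<Rightarrow> complex \<times> complex) \<Rightarrow> (complex \<times> complex) set \<Rightarrow> nat \<Rightarrow> real" where
  "growth_seq f S n = ln (Sup ((\<lambda>p. onorm (frechet_derivative (f ^^ n) (at p))) ` S)) / real n"

definition splus_seq where "splus_seq g V = growth_seq g (Jplus g \<inter> V)"
definition sminus_seq where "sminus_seq g V = growth_seq (inv g) (Jminus g \<inter> V)"

end

theory Submission
  imports Defs
begin


lemma subadd_iter:
  fixes b :: "nat \<Rightarrow> real"
  assumes sub: "\<And>m n. b (m+n) \<le> b m + b n"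
  shows "b (q*k + r) \<le> real q * b k + b r"
proof (induction q)
  case 0 then show ?case by simp
next
  case (Suc q)
  have "b (Suc q * k + r) = b (k + (q*k + r))" by (simp add: algebra_simps)
  also have "\<dots> \<le> b k + b (q*k+r)" by (rule sub)
  also have "\<dots> \<le> b k + (real q * b k + b r)" using Suc by simp
  finally show ?case by (simp add: algebra_simps)
qed

lemma fekete:
  fixes b :: "nat \<Rightarrow> real"
  assumes sub: "\<And>m n. b (m+n) \<le> b m + b n" and low: "\<And>n. c * real n \<le> b n"
  shows "convergent (\<lambda>n. b n / real n)"
proof -
  define L where "L = (INF n\<in>{1..}. b n / real n)"
  have bdd: "bdd_below ((\<lambda>n. b n / real n) ` {1..})"
  proof (rule bdd_belowI2)
    fix n :: nat assume "n \<in> {1..}"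
    then have "n > 0" by auto
    then show "c \<le> b n / real n" using low[of n] by (simp add: field_simps)
  qed
  have lower: "L \<le> b n / real n" if "n \<ge> 1" for n
    unfolding L_def using that bdd by (intro cINF_lower) auto
  have "(\<lambda>n. b n / real n) \<longlonglongrightarrow> L"
  proof (rule LIMSEQ_I)
    fix e :: real assume e: "e > 0"
    have "L < L + e/2" using e by simp
    then obtain k where k1: "k \<ge> 1" and kL: "b k / real k < L + e/2"
      unfolding L_def using bdd by (subst (asm) cINF_less_iff) auto
    define R where "R = (\<Sum>r<k. \<bar>b r\<bar>)"
    have R: "b r \<le> R" if "r < k" for r
    proof -
      have "b r \<le> \<bar>b r\<bar>" by simp
      also have "\<bar>b r\<bar> \<le> R" unfolding R_def
        by (rule member_le_sum) (use that in auto)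
      finally show ?thesis .
    qed
    have R0: "R \<ge> 0" unfolding R_def by (simp add: sum_nonneg)
    define T where "T = \<bar>b k\<bar> + R"
    have T0: "T \<ge> 0" unfolding T_def using R0 by simp
    obtain N :: nat where N: "N > 2 * T / e" "N \<ge> 1"
    proof -
      obtain N' :: nat where "2 * T / e < real N'" using reals_Archimedean2 by blast
      then show ?thesis using that[of "N'+1"] by simp
    qed
    show "\<exists>no. \<forall>n\<ge>no. norm (b n / real n - L) < e"
    proof (intro exI allI impI)
      fix n assume nN: "n \<ge> N"
      then have n1: "n \<ge> 1" using N by simp
      have npos: "real n > 0" using n1 by simp
      define q where "q = n div k"
      define r where "r = n mod k"
      have nqr: "n = q * k + r" unfolding q_def r_def by simp
      have rk: "r < k" unfolding r_def using k1 by simp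
      have bn: "b n \<le> real q * b k + R"
        using subadd_iter[OF sub, of q k r] R[OF rk] nqr by simp
      have kpos: "real k > 0" using k1 by simp
      have nreal: "real n = real q * real k + real r" using nqr by (metis of_nat_add of_nat_mult)
      have "real q * b k = real n * (b k / real k) - real r * (b k / real k)"
        using kpos by (simp add: nreal field_simps)
      also have "- (real r * (b k / real k)) \<le> \<bar>b k\<bar>"
      proof -
        have "\<bar>real r * (b k / real k)\<bar> = real r / real k * \<bar>b k\<bar>"
          using kpos by (simp add: abs_mult)
        also have "\<dots> \<le> 1 * \<bar>b k\<bar>"
          using rk kpos by (intro mult_right_mono) auto
        finally have h: "\<bar>real r * (b k / real k)\<bar> \<le> \<bar>b k\<bar>" by simp
        show ?thesis using h abs_ge_minus_self[of "real r * (b k / real k)"] by linarith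
      qed
      then have "real n * (b k / real k) - real r * (b k / real k) \<le> real n * (b k / real k) + \<bar>b k\<bar>"
        by simp
      finally have "b n \<le> real n * (b k / real k) + T"
        using bn unfolding T_def by simp
      then have up: "b n / real n \<le> b k / real k + T / real n"
        using npos by (simp add: field_simps)
      have t1: "T / real n \<le> T / real N"
        using T0 nN N(2) by (intro divide_left_mono) auto
      have t2: "T / real N < e/2"
        using N e by (simp add: field_simps)
      have up2: "b n / real n < L + e"
        using up kL t1 t2 by linarith
      have lo: "L \<le> b n / real n" using lower[OF n1] .
      show "norm (b n / real n - L) < e" using up2 lo by simp
    qed
  qed
  then show ?thesis by (rule convergentI)
qed



type_synonym c2 = "complex \<times> complex"

definition Qd :: "(c2 \<Rightarrow> c2) \<Rightarrow> bool" where
  "Qd F \<longleftrightarrow> (\<forall>x. F differentiable at x) \<and>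
     (\<forall>S. compact S \<longrightarrow> (\<exists>M. \<forall>x\<in>S. onorm (frechet_derivative F (at x)) \<le> M))"

lemma Qd_diff: "Qd F \<Longrightarrow> F differentiable at x"
  unfolding Qd_def by blast

lemma Qd_bound: "Qd F \<Longrightarrow> compact S \<Longrightarrow> \<exists>M. \<forall>x\<in>S. onorm (frechet_derivative F (at x)) \<le> M"
  unfolding Qd_def by blast

lemma Qd_bl: "Qd F \<Longrightarrow> bounded_linear (frechet_derivative F (at x))"
  using Qd_diff frechet_derivative_works has_derivative_bounded_linear by blast

lemma Qd_cont: "Qd F \<Longrightarrow> continuous_on S F"
  by (intro differentiable_imp_continuous_on differentiable_at_imp_differentiable_on Qd_diff)

lemma onorm_id': "onorm (id :: c2 \<Rightarrow> c2) = 1"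
  using onorm_id[where 'a=c2] by (simp add: id_def)

lemma Qd_id: "Qd id"
  unfolding Qd_def id_def using onorm_id[where 'a=c2] by auto

lemma Qd_comp:
  assumes F: "Qd F" and G: "Qd G"
  shows "Qd (F \<circ> G)"
  unfolding Qd_def
proof (intro conjI allI impI)
  fix x show "(F \<circ> G) differentiable at x"
    using differentiable_chain_at Qd_diff[OF F] Qd_diff[OF G] by blast
next
  fix S :: "c2 set" assume S: "compact S"
  have "compact (G ` S)" using compact_continuous_image[OF Qd_cont[OF G] S] .
  then obtain MF where MF: "\<forall>y\<in>G`S. onorm (frechet_derivative F (at y)) \<le> MF"
    using Qd_bound[OF F] by blast
  obtain MG where MG: "\<forall>x\<in>S. onorm (frechet_derivative G (at x)) \<le> MG"
    using Qd_bound[OF G S] by blast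
  show "\<exists>M. \<forall>x\<in>S. onorm (frechet_derivative (F \<circ> G) (at x)) \<le> M"
  proof (intro exI ballI)
    fix x assume x: "x \<in> S"
    have eq: "frechet_derivative (F \<circ> G) (at x) = frechet_derivative F (at (G x)) \<circ> frechet_derivative G (at x)"
      by (rule frechet_derivative_compose) (use Qd_diff[OF F] Qd_diff[OF G] in auto)
    have "onorm (frechet_derivative (F \<circ> G) (at x)) \<le> onorm (frechet_derivative F (at (G x))) * onorm (frechet_derivative G (at x))"
      unfolding eq by (rule onorm_compose) (use Qd_bl[OF F] Qd_bl[OF G] in auto)
    also have "\<dots> \<le> MF * MG"
      using MF MG x by (intro mult_mono) (auto intro: onorm_pos_le Qd_bl[OF F] Qd_bl[OF G] order_trans[OF onorm_pos_le[OF Qd_bl[OF F]]])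
    finally show "onorm (frechet_derivative (F \<circ> G) (at x)) \<le> MF * MG" .
  qed
qed

lemma Qd_funpow: "Qd F \<Longrightarrow> Qd (F ^^ n)"
  by (induction n) (auto simp: Qd_id Qd_comp)

lemma Qd_intro:
  assumes D: "\<And>x. (F has_derivative D x) (at x)"
    and phi: "continuous_on UNIV phi"
    and bd: "\<And>x d. norm (D x d) \<le> phi x * norm d"
  shows "Qd F"
  unfolding Qd_def
proof (intro conjI allI impI)
  fix x show "F differentiable at x" using D differentiable_def by blast
next
  fix S :: "c2 set" assume S: "compact S"
  have "compact (phi ` S)" using compact_continuous_image[OF continuous_on_subset[OF phi] S] by auto
  then obtain M where M: "\<forall>y\<in>phi`S. norm y \<le> M" using compact_imp_bounded bounded_iff by metis
  show "\<exists>M. \<forall>x\<in>S. onorm (frechet_derivative F (at x)) \<le> M"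
  proof (intro exI ballI)
    fix x assume x: "x \<in> S"
    have "frechet_derivative F (at x) = D x" using frechet_derivative_at[OF D] by simp
    moreover have "onorm (D x) \<le> phi x" by (rule onorm_le) (rule bd)
    moreover have "phi x \<le> M" using M x by force
    ultimately show "onorm (frechet_derivative F (at x)) \<le> M" by simp
  qed
qed



definition Aseq :: "(c2 \<Rightarrow> c2) \<Rightarrow> c2 set \<Rightarrow> nat \<Rightarrow> real" where
  "Aseq f C n = Sup ((\<lambda>p. onorm (frechet_derivative (f ^^ n) (at p))) ` C)"

lemma growth_seq_eq: "growth_seq f C = (\<lambda>n. ln (Aseq f C n) / real n)"
  by (simp add: growth_seq_def Aseq_def fun_eq_iff)

lemma funpow_inv_pt:
  fixes f h :: "'a \<Rightarrow> 'a"
  assumes hf: "\<And>y. h (f y) = y" shows "(h ^^ n) ((f ^^ n) p) = p"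
proof (induction n arbitrary: p)
  case 0 then show ?case by simp
next
  case (Suc n)
  have "(h ^^ Suc n) ((f ^^ Suc n) p) = (h ^^ n) (h (f ((f ^^ n) p)))"
    by (metis comp_apply funpow.simps(2) funpow_Suc_right)
  also have "\<dots> = p" using Suc hf by simp
  finally show ?case .
qed

lemma funpow_invariant: "f ` C \<subseteq> C \<Longrightarrow> p \<in> C \<Longrightarrow> (f ^^ n) p \<in> C"
  by (induction n) auto

lemma dfun_comp:
  assumes "Qd F" "Qd G"
  shows "onorm (frechet_derivative (F \<circ> G) (at x)) \<le>
     onorm (frechet_derivative F (at (G x))) * onorm (frechet_derivative G (at x))"
proof -
  have eq: "frechet_derivative (F \<circ> G) (at x) = frechet_derivative F (at (G x)) \<circ> frechet_derivative G (at x)"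
    by (rule frechet_derivative_compose) (use Qd_diff[OF assms(1)] Qd_diff[OF assms(2)] in auto)
  show ?thesis
    unfolding eq by (rule onorm_compose) (use Qd_bl[OF assms(1)] Qd_bl[OF assms(2)] in auto)
qed

locale dyn =
  fixes f h :: "c2 \<Rightarrow> c2"
  assumes Qf: "Qd f" and Qh: "Qd h" and hf: "\<And>y. h (f y) = y"
begin

lemma Qfn: "Qd (f ^^ n)" using Qd_funpow[OF Qf] .

lemma onorm_nonneg: "0 \<le> onorm (frechet_derivative (f ^^ n) (at p))"
  by (rule onorm_pos_le[OF Qd_bl[OF Qfn]])

lemma submult_pt:
  "onorm (frechet_derivative (f ^^ (m + n)) (at p)) \<le>
   onorm (frechet_derivative (f ^^ m) (at ((f ^^ n) p))) * onorm (frechet_derivative (f ^^ n) (at p))"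
  unfolding funpow_add using dfun_comp[OF Qfn Qfn] by simp

context
  fixes C :: "c2 set"
  assumes C: "compact C" and inv: "f ` C \<subseteq> C" and ne: "C \<noteq> {}"
begin

lemma bdd: "bdd_above ((\<lambda>p. onorm (frechet_derivative (f ^^ n) (at p))) ` C)"
proof -
  obtain M where "\<forall>x\<in>C. onorm (frechet_derivative (f ^^ n) (at x)) \<le> M"
    using Qd_bound[OF Qfn C] by blast
  then show ?thesis by (intro bdd_aboveI2) auto
qed

lemma A_upper: "p \<in> C \<Longrightarrow> onorm (frechet_derivative (f ^^ n) (at p)) \<le> Aseq f C n"
  unfolding Aseq_def by (rule cSUP_upper[OF _ bdd])

lemma A_lower:
  obtains B :: real where "B \<ge> 1" "\<And>n. 1 / B ^ n \<le> Aseq f C n"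
proof -
  obtain B0 where B0: "\<forall>x\<in>C. onorm (frechet_derivative h (at x)) \<le> B0"
    using Qd_bound[OF Qh C] by blast
  define B where "B = max B0 1"
  have B1: "B \<ge> 1" unfolding B_def by simp
  have hb: "onorm (frechet_derivative (h ^^ n) (at ((f ^^ n) p))) \<le> B ^ n" if "p \<in> C" for n p
    using that
  proof (induction n arbitrary: p)
    case 0 then show ?case using onorm_id_le by simp
  next
    case (Suc n)
    let ?x = "(f ^^ Suc n) p"
    have x: "?x \<in> C" using funpow_invariant[OF inv Suc.prems] .
    have hx: "h ?x = (f ^^ n) p" using hf by simp
    have "onorm (frechet_derivative (h ^^ Suc n) (at ?x)) \<le>
       onorm (frechet_derivative (h ^^ n) (at (h ?x))) * onorm (frechet_derivative h (at ?x))"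
      unfolding funpow_Suc_right using dfun_comp[OF Qd_funpow[OF Qh] Qh] .
    also have "\<dots> \<le> B ^ n * B"
      unfolding hx using Suc.IH[OF Suc.prems] B0 x
      by (intro mult_mono) (auto simp: B_def intro: onorm_pos_le Qd_bl Qh Qd_funpow)
    finally show ?case by (simp only: power_Suc2)
  qed
  obtain p0 where p0: "p0 \<in> C" using ne by blast
  have low: "1 / B ^ n \<le> Aseq f C n" for n
  proof -
    have comp: "(h ^^ n) \<circ> (f ^^ n) = id" using funpow_inv_pt[of h f n] hf by (auto simp: fun_eq_iff)
    have "1 = onorm (frechet_derivative ((h ^^ n) \<circ> (f ^^ n)) (at p0))"
      unfolding comp using onorm_id' by simp
    also have "\<dots> \<le> onorm (frechet_derivative (h ^^ n) (at ((f ^^ n) p0))) * onorm (frechet_derivative (f ^^ n) (at p0))"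
      using dfun_comp[OF Qd_funpow[OF Qh] Qfn] .
    also have "\<dots> \<le> B ^ n * Aseq f C n"
      using hb[OF p0] A_upper[OF p0] B1 by (intro mult_mono) (auto intro: onorm_pos_le Qd_bl Qh Qd_funpow onorm_nonneg)
    finally have "1 \<le> B ^ n * Aseq f C n" .
    moreover have "B ^ n > 0" using B1 by simp
    ultimately show ?thesis by (simp add: field_simps)
  qed
  show ?thesis using that B1 low by blast
qed

lemma A_pos: "Aseq f C n > 0"
proof -
  obtain B :: real where "B \<ge> 1" "\<And>n. 1 / B ^ n \<le> Aseq f C n" using A_lower by blast
  moreover have "1 / B ^ n > 0" using \<open>B \<ge> 1\<close> by simp
  ultimately show ?thesis by (meson less_le_trans)
qed

lemma A_cross:
  assumes C': "compact C'" "f ` C' \<subseteq> C'" "C' \<noteq> {}" and into: "(f ^^ n) ` C \<subseteq> C'"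
  shows "Aseq f C (m + n) \<le> Aseq f C' m * Aseq f C n"
  unfolding Aseq_def[of f C "m+n"]
proof (rule cSUP_least[OF ne])
  fix p assume p: "p \<in> C"
  have "onorm (frechet_derivative (f ^^ (m + n)) (at p)) \<le>
   onorm (frechet_derivative (f ^^ m) (at ((f ^^ n) p))) * onorm (frechet_derivative (f ^^ n) (at p))"
    by (rule submult_pt)
  also have "\<dots> \<le> Aseq f C' m * Aseq f C n"
    using dyn_axioms into p A_upper[OF p, of n]
    by (intro mult_mono onorm_nonneg) (auto intro: dyn.A_upper[OF _ C'] less_imp_le dyn.A_pos[OF _ C'])
  finally show "onorm (frechet_derivative (f ^^ (m + n)) (at p)) \<le> Aseq f C' m * Aseq f C n" .
qed

lemma conv: "convergent (growth_seq f C)"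
proof -
  obtain B :: real where B: "B \<ge> 1" "\<And>n. 1 / B ^ n \<le> Aseq f C n" using A_lower by blast
  have sub: "ln (Aseq f C (m + n)) \<le> ln (Aseq f C m) + ln (Aseq f C n)" for m n
  proof -
    have "Aseq f C (m + n) \<le> Aseq f C m * Aseq f C n"
      by (rule A_cross[OF C inv ne]) (use funpow_invariant[OF inv] in auto)
    then have "ln (Aseq f C (m + n)) \<le> ln (Aseq f C m * Aseq f C n)"
      using A_pos by simp
    also have "\<dots> = ln (Aseq f C m) + ln (Aseq f C n)" using A_pos[of m] A_pos[of n] by (simp add: ln_mult)
    finally show ?thesis .
  qed
  have low: "(- ln B) * real n \<le> ln (Aseq f C n)" for n
  proof -
    have "ln (1 / B ^ n) \<le> ln (Aseq f C n)" using B(2)[of n] B(1) A_pos by simp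
    moreover have "ln (1 / B ^ n) = (- ln B) * real n" using B(1) by (simp add: ln_div ln_realpow)
    ultimately show ?thesis by simp
  qed
  show ?thesis unfolding growth_seq_eq by (rule fekete[OF sub low])
qed

end
end



context dyn begin

lemma eventually_into:
  assumes C: "compact C" and inv: "f ` C \<subseteq> C" and U: "open U"
    and K: "\<forall>q\<in>C. (\<forall>n. (h ^^ n) q \<in> C) \<longrightarrow> q \<in> U"
  shows "\<exists>N. (f ^^ N) ` C \<subseteq> U"
proof (rule ccontr)
  assume no: "\<not> (\<exists>N. (f ^^ N) ` C \<subseteq> U)"
  define F where "F N = (f ^^ N) ` C - U" for N
  have Fc: "compact (F N)" for N
    unfolding F_def by (rule compact_diff[OF compact_continuous_image[OF Qd_cont[OF Qfn] C] U])
  have Fne: "F N \<noteq> {}" for N using no unfolding F_def by blast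
  have Fmono: "F n \<subseteq> F m" if mn: "m \<le> n" for m n
  proof -
    obtain k where n: "n = m + k" using le_Suc_ex[OF mn] by blast
    have e: "(f ^^ n) ` C = (f ^^ m) ` ((f ^^ k) ` C)" by (simp only: n funpow_add image_comp)
    have "(f ^^ k) ` C \<subseteq> C" using funpow_invariant[OF inv] by auto
    then have "(f ^^ m) ` ((f ^^ k) ` C) \<subseteq> (f ^^ m) ` C" by (rule image_mono)
    then have "(f ^^ n) ` C \<subseteq> (f ^^ m) ` C" unfolding e .
    then show ?thesis unfolding F_def by blast
  qed
  have "\<Inter>(range F) \<noteq> {}" by (rule compact_nest[OF Fc Fne Fmono])
  then obtain q where q: "q \<in> \<Inter>(range F)" by (meson ex_in_conv)
  have qF: "q \<in> F n" for n by (rule InterD[OF q]) simp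
  have qC: "q \<in> C" and qU: "q \<notin> U" using qF[of 0] unfolding F_def by auto
  have "(h ^^ n) q \<in> C" for n
  proof -
    have "q \<in> (f ^^ n) ` C" using qF[of n] unfolding F_def by blast
    then obtain c where "c \<in> C" "q = (f ^^ n) c" by blast
    then show ?thesis using funpow_inv_pt[of h f n c, OF hf] by simp
  qed
  then show False using K qC qU by blast
qed

lemma lim_le:
  assumes C: "compact C" "f ` C \<subseteq> C" "C \<noteq> {}"
    and C': "compact C'" "f ` C' \<subseteq> C'" "C' \<noteq> {}"
    and into: "(f ^^ N) ` C \<subseteq> C'"
    and L: "growth_seq f C \<longlonglongrightarrow> L" and L': "growth_seq f C' \<longlonglongrightarrow> L'"
  shows "L \<le> L'"
proof -
  define b where "b n = ln (Aseq f C n)" for n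
  define b' where "b' n = ln (Aseq f C' n)" for n
  have ineq: "b (n + N) \<le> b' n + b N" for n
  proof -
    have "Aseq f C (n + N) \<le> Aseq f C' n * Aseq f C N"
      by (rule A_cross[OF C C' into])
    then have "ln (Aseq f C (n + N)) \<le> ln (Aseq f C' n * Aseq f C N)"
      using A_pos[OF C, of "n+N"] by (intro ln_mono) auto
    also have "\<dots> = b' n + b N" unfolding b_def b'_def
      using A_pos[OF C, of N] A_pos[OF C', of n] by (simp add: ln_mult)
    finally show ?thesis unfolding b_def .
  qed
  have X: "(\<lambda>n. b (n + N) / real (n + N)) \<longlonglongrightarrow> L"
    using LIMSEQ_ignore_initial_segment[OF L, of N] unfolding growth_seq_eq b_def .
  have c0: "(\<lambda>n. c / real (n + N)) \<longlonglongrightarrow> 0" for c :: real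
    using LIMSEQ_ignore_initial_segment[OF lim_const_over_n[of c], of N] by simp
  have Z: "(\<lambda>n. (b' n / real n) * (1 - real N / real (n + N)) + b N / real (n + N)) \<longlonglongrightarrow> L' * (1 - 0) + 0"
    using L' unfolding growth_seq_eq b'_def[symmetric]
    by (intro tendsto_intros c0)
  have Y: "(\<lambda>n. (b' n + b N) / real (n + N)) \<longlonglongrightarrow> L'"
  proof -
    have "\<forall>\<^sub>F n in sequentially. (b' n / real n) * (1 - real N / real (n + N)) + b N / real (n + N)
           = (b' n + b N) / real (n + N)"
    proof (rule eventually_sequentiallyI[of 1])
      fix n :: nat assume "n \<ge> 1"
      then have pos: "real n > 0" "real (n + N) > 0" by auto
      have e1: "1 - real N / real (n+N) = real n / real (n+N)"
        using pos by (simp add: field_simps)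
      have e2: "b' n / real n * (real n / real (n+N)) = b' n / real (n+N)" using pos by simp
      show "(b' n / real n) * (1 - real N / real (n + N)) + b N / real (n + N)
           = (b' n + b N) / real (n + N)" unfolding e1 e2 by (simp add: add_divide_distrib)
    qed
    with Z show ?thesis by (simp add: tendsto_cong)
  qed
  have le: "\<forall>n\<ge>0. b (n + N) / real (n + N) \<le> (b' n + b N) / real (n + N)"
  proof (intro allI impI)
    fix n :: nat
    show "b (n + N) / real (n + N) \<le> (b' n + b N) / real (n + N)"
      by (rule divide_right_mono[OF ineq[of n]]) simp
  qed
  show ?thesis
    by (rule LIMSEQ_le[OF X Y]) (rule exI[of _ 0], rule le)
qed

end

context dyn begin
lemma same_limit:
  assumes C: "compact C" "f ` C \<subseteq> C"
    and C': "compact C'" "f ` C' \<subseteq> C'"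
    and U: "open U" and U': "open U'"
    and CU': "C \<inter> U' \<subseteq> C'" and C'U: "C' \<inter> U \<subseteq> C"
    and K: "\<forall>q\<in>C. (\<forall>n. (h ^^ n) q \<in> C) \<longrightarrow> q \<in> U'"
    and K': "\<forall>q\<in>C'. (\<forall>n. (h ^^ n) q \<in> C') \<longrightarrow> q \<in> U"
  shows "\<exists>L. growth_seq f C \<longlonglongrightarrow> L \<and> growth_seq f C' \<longlonglongrightarrow> L"
proof -
  obtain N where N: "(f ^^ N) ` C \<subseteq> U'" using eventually_into[OF C(1,2) U' K] by blast
  obtain N' where N': "(f ^^ N') ` C' \<subseteq> U" using eventually_into[OF C'(1,2) U K'] by blast
  have into: "(f ^^ N) ` C \<subseteq> C'" using N CU' funpow_invariant[OF C(2)] by blast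
  have into': "(f ^^ N') ` C' \<subseteq> C" using N' C'U funpow_invariant[OF C'(2)] by blast
  show ?thesis
  proof (cases "C = {}")
    case True
    then have "C' = {}" using into' by blast
    have "growth_seq f {} \<longlonglongrightarrow> 0"
      unfolding growth_seq_eq Aseq_def by (simp add: lim_const_over_n)
    then show ?thesis unfolding True \<open>C' = {}\<close> by (intro exI conjI)
  next
    case False
    then have ne': "C' \<noteq> {}" using into by blast
    obtain L where L: "growth_seq f C \<longlonglongrightarrow> L" using conv[OF C False] convergent_def by blast
    obtain L' where L': "growth_seq f C' \<longlonglongrightarrow> L'" using conv[OF C' ne'] convergent_def by blast
    have "L \<le> L'" by (rule lim_le[OF C False C' ne' into L L'])
    moreover have "L' \<le> L" by (rule lim_le[OF C' ne' C False into' L' L])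
    ultimately show ?thesis using L L' by auto
  qed
qed

end


definition hinv :: "complex poly \<Rightarrow> complex \<Rightarrow> c2 \<Rightarrow> c2" where
  "hinv P a = (\<lambda>(u, v). ((v - poly P u) / a, u))"

lemma poly_snd_deriv:
  "((\<lambda>x::c2. poly P (snd x)) has_derivative (\<lambda>d. poly (pderiv P) (snd x) * snd d)) (at x)"
proof -
  have "(poly P has_derivative (*) (poly (pderiv P) (snd x))) (at (snd x))"
    using poly_DERIV[of P "snd x"] by (simp add: has_field_derivative_def)
  from has_derivative_compose[OF has_derivative_snd[OF has_derivative_ident] this]
  show ?thesis by simp
qed

lemma poly_fst_deriv:
  "((\<lambda>x::c2. poly P (fst x)) has_derivative (\<lambda>d. poly (pderiv P) (fst x) * fst d)) (at x)"
proof -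
  have "(poly P has_derivative (*) (poly (pderiv P) (fst x))) (at (fst x))"
    using poly_DERIV[of P "fst x"] by (simp add: has_field_derivative_def)
  from has_derivative_compose[OF has_derivative_fst[OF has_derivative_ident] this]
  show ?thesis by simp
qed

lemma Qd_henon: "Qd (henon P a)"
proof (rule Qd_intro)
  fix x :: c2
  have eq: "henon P a = (\<lambda>x. (snd x, poly P (snd x) + a * fst x))"
    by (auto simp: henon_def fun_eq_iff)
  show "(henon P a has_derivative (\<lambda>d. (snd d, poly (pderiv P) (snd x) * snd d + a * fst d))) (at x)"
    unfolding eq
    by (intro has_derivative_Pair has_derivative_add poly_snd_deriv has_derivative_snd[OF has_derivative_ident]
        has_derivative_mult_right has_derivative_fst[OF has_derivative_ident])
next
  show "continuous_on UNIV (\<lambda>x::c2. 1 + norm (poly (pderiv P) (snd x)) + norm a)"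
    by (intro continuous_intros)
next
  fix x d :: c2
  have nsd: "norm (snd d) \<le> norm d" by (metis norm_snd_le prod.collapse)
  have nfd: "norm (fst d) \<le> norm d" by (metis norm_fst_le prod.collapse)
  let ?c = "poly (pderiv P) (snd x)"
  have "norm (snd d, ?c * snd d + a * fst d) \<le> norm (snd d) + norm (?c * snd d + a * fst d)"
    by (rule norm_Pair_le)
  also have "\<dots> \<le> norm (snd d) + (norm ?c * norm (snd d) + norm a * norm (fst d))"
    by (metis add_left_mono norm_mult norm_triangle_ineq)
  also have "\<dots> \<le> norm d + (norm ?c * norm d + norm a * norm d)"
    using nsd nfd by (intro add_mono mult_left_mono) auto
  also have "\<dots> = (1 + norm ?c + norm a) * norm d" by (simp add: algebra_simps)
  finally show "norm (snd d, ?c * snd d + a * fst d) \<le> (1 + norm ?c + norm a) * norm d" .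
qed

lemma Qd_hinv: assumes a: "a \<noteq> 0" shows "Qd (hinv P a)"
proof (rule Qd_intro)
  fix x :: c2
  have eq: "hinv P a = (\<lambda>x. ((snd x - poly P (fst x)) / a, fst x))"
    by (auto simp: hinv_def fun_eq_iff)
  show "(hinv P a has_derivative (\<lambda>d. ((snd d - poly (pderiv P) (fst x) * fst d) / a, fst d))) (at x)"
    unfolding eq
    by (intro has_derivative_Pair bounded_linear.has_derivative[OF bounded_linear_divide] has_derivative_diff
        poly_fst_deriv has_derivative_snd[OF has_derivative_ident]
        has_derivative_fst[OF has_derivative_ident])
next
  show "continuous_on UNIV (\<lambda>x::c2. 1 + (1 + norm (poly (pderiv P) (fst x))) / norm a)"
    using a by (intro continuous_intros) auto
next
  fix x d :: c2
  have nsd: "norm (snd d) \<le> norm d" by (metis norm_snd_le prod.collapse)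
  have nfd: "norm (fst d) \<le> norm d" by (metis norm_fst_le prod.collapse)
  let ?c = "poly (pderiv P) (fst x)"
  have "norm ((snd d - ?c * fst d) / a, fst d) \<le> norm ((snd d - ?c * fst d) / a) + norm (fst d)"
    by (rule norm_Pair_le)
  also have "norm ((snd d - ?c * fst d) / a) = norm (snd d - ?c * fst d) / norm a"
    by (simp add: norm_divide)
  also have "norm (snd d - ?c * fst d) \<le> norm (snd d) + norm ?c * norm (fst d)"
    by (metis norm_mult norm_triangle_ineq4)
  also have "norm (snd d) + norm ?c * norm (fst d) \<le> norm d + norm ?c * norm d"
    using nsd nfd by (intro add_mono mult_left_mono) auto
  finally have "norm ((snd d - ?c * fst d) / a, fst d) \<le> (norm d + norm ?c * norm d) / norm a + norm (fst d)"
    by (simp add: divide_right_mono)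
  also have "\<dots> \<le> (norm d + norm ?c * norm d) / norm a + norm d"
    using nfd by simp
  also have "\<dots> = (1 + (1 + norm ?c) / norm a) * norm d" by (simp add: algebra_simps add_divide_distrib)
  finally show "norm ((snd d - ?c * fst d) / a, fst d) \<le> (1 + (1 + norm ?c) / norm a) * norm d" .
qed

lemma hinv_henon: "a \<noteq> 0 \<Longrightarrow> hinv P a (henon P a x) = x"
  by (cases x) (simp add: hinv_def henon_def)

lemma henon_hinv: "a \<noteq> 0 \<Longrightarrow> henon P a (hinv P a x) = x"
  by (cases x) (simp add: hinv_def henon_def)



lemma foldr_struct:
  assumes "\<forall>(P, a) \<in> set L. a \<noteq> 0"
  shows "\<exists>h. Qd (foldr (\<lambda>(P, a) f. henon P a \<circ> f) L id) \<and> Qd h \<and>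
     (\<forall>y. h (foldr (\<lambda>(P, a) f. henon P a \<circ> f) L id y) = y) \<and>
     (\<forall>y. foldr (\<lambda>(P, a) f. henon P a \<circ> f) L id (h y) = y)"
  using assms
proof (induction L)
  case Nil
  then show ?case using Qd_id[unfolded id_def] by auto
next
  case (Cons Pa L)
  obtain P a where Pa: "Pa = (P, a)" by (cases Pa)
  have a: "a \<noteq> 0" using Cons.prems Pa by auto
  let ?G = "foldr (\<lambda>(P, a) f. henon P a \<circ> f) L id"
  have prem: "\<forall>(P, a) \<in> set L. a \<noteq> 0" using Cons.prems by auto
  obtain h where h: "Qd ?G" "Qd h" "\<forall>y. h (?G y) = y" "\<forall>y. ?G (h y) = y"
    using Cons.IH[OF prem] by blast
  have eq: "foldr (\<lambda>(P, a) f. henon P a \<circ> f) (Pa # L) id = henon P a \<circ> ?G"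
    by (simp add: Pa)
  show ?case unfolding eq
  proof (intro exI[of _ "h \<circ> hinv P a"] conjI allI)
    show "Qd (henon P a \<circ> ?G)" by (rule Qd_comp[OF Qd_henon h(1)])
    show "Qd (h \<circ> hinv P a)" by (rule Qd_comp[OF h(2) Qd_hinv[OF a]])
    fix y
    show "(h \<circ> hinv P a) ((henon P a \<circ> ?G) y) = y" using h(3) hinv_henon[OF a] by (metis comp_apply)
    show "(henon P a \<circ> ?G) ((h \<circ> hinv P a) y) = y" using h(4) henon_hinv[OF a] by (metis comp_apply)
  qed
qed

lemma Hd_struct:
  assumes "g \<in> Hd d"
  shows "\<exists>h. Qd g \<and> Qd h \<and> (\<forall>y. h (g y) = y) \<and> (\<forall>y. g (h y) = y)"
proof -
  obtain L where g: "g = foldr (\<lambda>(P, a) f. henon P a \<circ> f) L id"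
    and L: "\<forall>(P, a) \<in> set L. degree P \<ge> 2 \<and> a \<noteq> 0"
    using assms unfolding Hd_def by blast
  have "\<forall>(P, a) \<in> set L. a \<noteq> 0" using L by auto
  from foldr_struct[OF this] show ?thesis unfolding g .
qed

theorem proposition5p1:
  fixes d :: nat and g :: "complex \<times> complex \<Rightarrow> complex \<times> complex"
    and V V' :: "(complex \<times> complex) set"
  assumes "d \<ge> 2" and "g \<in> Hd d"
    and "admissible g V" and "admissible g V'"
  shows "(\<exists>L. splus_seq g V \<longlonglongrightarrow> L \<and> splus_seq g V' \<longlonglongrightarrow> L) \<and>
         (\<exists>L. sminus_seq g V \<longlonglongrightarrow> L \<and> sminus_seq g V' \<longlonglongrightarrow> L)"
proof -
  obtain h where Qg: "Qd g" and Qh: "Qd h" and hg: "\<And>y. h (g y) = y" and gh: "\<And>y. g (h y) = y"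
    using Hd_struct[OF assms(2)] by blast
  have invg: "inv g = h"
    by (rule inv_unique_comp) (auto simp: fun_eq_iff hg gh)
  have adV: "compact V" "Kset g \<subseteq> interior V" "g ` (Jplus g \<inter> V) \<subseteq> Jplus g \<inter> V"
      "h ` (Jminus g \<inter> V) \<subseteq> Jminus g \<inter> V"
    using assms(3) unfolding admissible_def invg by auto
  have adV': "compact V'" "Kset g \<subseteq> interior V'" "g ` (Jplus g \<inter> V') \<subseteq> Jplus g \<inter> V'"
      "h ` (Jminus g \<inter> V') \<subseteq> Jminus g \<inter> V'"
    using assms(4) unfolding admissible_def invg by auto
  have clp: "closed (Jplus g)" unfolding Jplus_def by (rule frontier_closed)
  have clm: "closed (Jminus g)" unfolding Jminus_def by (rule frontier_closed)
  interpret D1: dyn g h using Qg Qh hg by unfold_locales auto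
  interpret D2: dyn h g using Qg Qh gh by unfold_locales auto
  have bnd: "bounded (range (\<lambda>n. (F ^^ n) q))" if "compact S" "\<forall>n. (F ^^ n) q \<in> S" for F q S
    using that by (meson bounded_subset compact_imp_bounded image_subset_iff rangeE)
  have K1: "\<forall>q\<in>Jplus g \<inter> W. (\<forall>n. (h ^^ n) q \<in> Jplus g \<inter> W) \<longrightarrow> q \<in> interior W'"
    if W: "compact W" "g ` (Jplus g \<inter> W) \<subseteq> Jplus g \<inter> W" and W': "Kset g \<subseteq> interior W'" for W W'
  proof (intro ballI impI)
    fix q assume q: "q \<in> Jplus g \<inter> W" and hq: "\<forall>n. (h ^^ n) q \<in> Jplus g \<inter> W"
    have cC: "compact (Jplus g \<inter> W)" using clp W(1) by (rule closed_Int_compact)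
    have "\<forall>n. (g ^^ n) q \<in> Jplus g \<inter> W" using funpow_invariant[OF W(2) q] by blast
    then have "bounded (range (\<lambda>n. (g ^^ n) q))" by (rule bnd[OF cC])
    then have "q \<in> Kplus g" unfolding Kplus_def by simp
    moreover have "bounded (range (\<lambda>n. (h ^^ n) q))" by (rule bnd[OF cC hq])
    then have "q \<in> Kminus g" unfolding Kminus_def invg by simp
    ultimately show "q \<in> interior W'" using W' unfolding Kset_def by blast
  qed
  have K2: "\<forall>q\<in>Jminus g \<inter> W. (\<forall>n. (g ^^ n) q \<in> Jminus g \<inter> W) \<longrightarrow> q \<in> interior W'"
    if W: "compact W" "h ` (Jminus g \<inter> W) \<subseteq> Jminus g \<inter> W" and W': "Kset g \<subseteq> interior W'" for W W'
  proof (intro ballI impI)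
    fix q assume q: "q \<in> Jminus g \<inter> W" and gq: "\<forall>n. (g ^^ n) q \<in> Jminus g \<inter> W"
    have cC: "compact (Jminus g \<inter> W)" using clm W(1) by (rule closed_Int_compact)
    have "\<forall>n. (h ^^ n) q \<in> Jminus g \<inter> W" using funpow_invariant[OF W(2) q] by blast
    then have "bounded (range (\<lambda>n. (h ^^ n) q))" by (rule bnd[OF cC])
    then have "q \<in> Kminus g" unfolding Kminus_def invg by simp
    moreover have "bounded (range (\<lambda>n. (g ^^ n) q))" by (rule bnd[OF cC gq])
    then have "q \<in> Kplus g" unfolding Kplus_def by simp
    ultimately show "q \<in> interior W'" using W' unfolding Kset_def by blast
  qed
  have cp: "compact (Jplus g \<inter> V)" using clp adV(1) by (rule closed_Int_compact)
  have cp': "compact (Jplus g \<inter> V')" using clp adV'(1) by (rule closed_Int_compact)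
  have cm: "compact (Jminus g \<inter> V)" using clm adV(1) by (rule closed_Int_compact)
  have cm': "compact (Jminus g \<inter> V')" using clm adV'(1) by (rule closed_Int_compact)
  have s1: "Jplus g \<inter> V \<inter> interior V' \<subseteq> Jplus g \<inter> V'" using interior_subset[of V'] by blast
  have s2: "Jplus g \<inter> V' \<inter> interior V \<subseteq> Jplus g \<inter> V" using interior_subset[of V] by blast
  have s3: "Jminus g \<inter> V \<inter> interior V' \<subseteq> Jminus g \<inter> V'" using interior_subset[of V'] by blast
  have s4: "Jminus g \<inter> V' \<inter> interior V \<subseteq> Jminus g \<inter> V" using interior_subset[of V] by blast
  have P: "\<exists>L. splus_seq g V \<longlonglongrightarrow> L \<and> splus_seq g V' \<longlonglongrightarrow> L"
    unfolding splus_seq_def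
    by (rule D1.same_limit[OF cp adV(3) cp' adV'(3) open_interior open_interior s1 s2
          K1[OF adV(1,3) adV'(2)] K1[OF adV'(1,3) adV(2)]])
  have M: "\<exists>L. sminus_seq g V \<longlonglongrightarrow> L \<and> sminus_seq g V' \<longlonglongrightarrow> L"
    unfolding sminus_seq_def invg
    by (rule D2.same_limit[OF cm adV(4) cm' adV'(4) open_interior open_interior s3 s4
          K2[OF adV(1,4) adV'(2)] K2[OF adV'(1,4) adV(2)]])
  show ?thesis using P M by blast
qed


end
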